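(* Let $\nu$ and $\nu'$ be $k$-atomic distributions supported on $[-1,1]$. If $|m_i(\nu)-m_i(\nu')|\le\delta$ for $i=1,\dots,2k-1$, then \[W_1(\nu,\nu')\le O\big(k\delta^{\frac{1}{2k-1}}\big).\]
   Context: A $k$-atomic distribution is a discrete distribution supported on (at most) $k$ points. $m_i(\pi)=\mathbb{E}_\pi X^i$. $W_1$ is the 1-Wasserstein distance: $W_1(\nu,\nu')=\inf\mathbb{E}|X-Y|$ over couplings of $\nu,\nu'$. $O(\cdot)$ hides an absolute constant. *)

theory Defs
  imports "HOL-Probability.Probability"
begin

definition k_atomic :: "nat \<Rightarrow> real pmf \<Rightarrow> bool" where
  "k_atomic k p \<longleftrightarrow> finite (set_pmf p) \<and> card (set_pmf p) \<le> k"

definition moment :: "nat \<Rightarrow> real pmf \<Rightarrow> real" where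
  "moment i p = measure_pmf.expectation p (\<lambda>x. x ^ i)"

text \<open>Couplings of two discrete distributions (any coupling of discrete
  measures is itself discrete, so pmfs on the product suffice).\<close>
definition couplings :: "real pmf \<Rightarrow> real pmf \<Rightarrow> (real \<times> real) pmf set" where
  "couplings p q = {c. map_pmf fst c = p \<and> map_pmf snd c = q}"

definition W1 :: "real pmf \<Rightarrow> real pmf \<Rightarrow> real" where
  "W1 p q = Inf ((\<lambda>c. measure_pmf.expectation c (\<lambda>(x, y). \<bar>x - y\<bar>)) ` couplings p q)"

end

theory Submission
  imports Defs "HOL-Computational_Algebra.Polynomial"
begin


definition ov :: "real \<Rightarrow> real \<Rightarrow> real \<Rightarrow> real \<Rightarrow> real" where
  "ov a b c d = max 0 (min b d - max a c)"

lemma ov_nonneg: "0 \<le> ov a b c d" by (simp add: ov_def)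
lemma ov_sym: "ov a b c d = ov c d a b" by (simp add: ov_def min.commute max.commute)

lemma ov_tele:
  assumes "mono f" "a \<le> b"
  shows "(\<Sum>j<n. ov a b (f j) (f (Suc j))) = ov a b (f 0) (f n)"
proof (induction n)
  case 0 then show ?case by (simp add: ov_def)
next
  case (Suc n)
  have "f 0 \<le> f n" "f n \<le> f (Suc n)" using assms(1) by (auto simp: mono_def)
  then show ?case using Suc assms(2) by (simp add: ov_def split: split_max split_min)
qed



lemma pmf_map_finite:
  assumes "finite A" "set_pmf q \<subseteq> A"
  shows "pmf (map_pmf f q) u = (\<Sum>p\<in>{p\<in>A. f p = u}. pmf q p)"
proof -
  have "pmf (map_pmf f q) u = measure q (f -` {u} \<inter> set_pmf q)"
    by (simp add: pmf_map measure_Int_set_pmf)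
  also have "\<dots> = (\<Sum>p\<in>f -` {u} \<inter> set_pmf q. pmf q p)"
    using assms by (intro measure_measure_pmf_finite) (auto intro: finite_subset)
  also have "\<dots> = (\<Sum>p\<in>{p\<in>A. f p = u}. pmf q p)"
    using assms by (intro sum.mono_neutral_left) (auto simp: set_pmf_eq)
  finally show ?thesis .
qed

lemma sum_ind:
  assumes "finite A"
  shows "(\<Sum>i\<in>A. (if P i then 1 else 0) * (f i::real)) = (\<Sum>i\<in>{i\<in>A. P i}. f i)"
proof -
  have "(\<Sum>i\<in>A. (if P i then 1 else 0) * (f i::real)) = (\<Sum>i\<in>A. if P i then f i else 0)"
    by (intro sum.cong) auto
  then show ?thesis using assms by (simp add: sum.inter_filter)
qed

lemma abs_diff_tele:
  fixes x :: "nat \<Rightarrow> real"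
  assumes "i < m" "j < m"
  shows "\<bar>x i - x j\<bar> \<le> (\<Sum>l<m-1. \<bar>x (Suc l) - x l\<bar> * (if (i \<le> l) \<noteq> (j \<le> l) then 1 else 0))"
proof -
  have key: "\<bar>x b - x a\<bar> \<le> (\<Sum>l<m-1. \<bar>x (Suc l) - x l\<bar> * (if (a \<le> l) \<noteq> (b \<le> l) then 1 else 0))"
    if "a \<le> b" "b < m" for a b
  proof -
    have "\<bar>x b - x a\<bar> = \<bar>\<Sum>l=a..<b. x (Suc l) - x l\<bar>" using that by (simp add: sum_Suc_diff')
    also have "\<dots> \<le> (\<Sum>l=a..<b. \<bar>x (Suc l) - x l\<bar>)" by (rule sum_abs)
    also have "\<dots> = (\<Sum>l\<in>{..<m-1}. \<bar>x (Suc l) - x l\<bar> * (if (a \<le> l) \<noteq> (b \<le> l) then 1 else 0))"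
    proof -
      have "(\<Sum>l\<in>{..<m-1}. \<bar>x (Suc l) - x l\<bar> * (if (a \<le> l) \<noteq> (b \<le> l) then 1 else 0))
          = (\<Sum>l\<in>{l\<in>{..<m-1}. (a \<le> l) \<noteq> (b \<le> l)}. \<bar>x (Suc l) - x l\<bar>)"
        by (simp add: sum.inter_filter[symmetric] if_distrib cong: if_cong)
      also have "{l\<in>{..<m-1}. (a \<le> l) \<noteq> (b \<le> l)} = {a..<b}" using that by auto
      finally show ?thesis by simp
    qed
    finally show ?thesis .
  qed
  show ?thesis
  proof (cases "i \<le> j")
    case True then show ?thesis using key[of i j] assms by (simp add: abs_minus_commute)
  next
    case False then show ?thesis using key[of j i] assms by (simp add: abs_minus_commute eq_commute[of "i \<le> _"])
  qed
qed



lemma coupling_bound: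
  fixes x :: "nat \<Rightarrow> real" and \<nu> \<nu>' :: "real pmf"
  assumes inj: "inj_on x {..<m}"
    and s1: "set_pmf \<nu> \<subseteq> x ` {..<m}" and s2: "set_pmf \<nu>' \<subseteq> x ` {..<m}"
  defines "F \<equiv> (\<lambda>j. \<Sum>i<j. pmf \<nu> (x i))" and "F' \<equiv> (\<lambda>j. \<Sum>i<j. pmf \<nu>' (x i))"
  shows "W1 \<nu> \<nu>' \<le> (\<Sum>l<m-1. \<bar>x (Suc l) - x l\<bar> * \<bar>F (Suc l) - F' (Suc l)\<bar>)"
proof -
  have monoF: "mono F" unfolding F_def
    by (intro monoI sum_mono2) (auto simp: pmf_nonneg)
  have monoF': "mono F'" unfolding F'_def
    by (intro monoI sum_mono2) (auto simp: pmf_nonneg)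
  have F0: "F 0 = 0" "F' 0 = 0" by (simp_all add: F_def F'_def)
  have Fm: "F m = 1"
  proof -
    have "F m = (\<Sum>u\<in>x ` {..<m}. pmf \<nu> u)" unfolding F_def using inj by (simp add: sum.reindex)
    also have "\<dots> = 1" using s1 by (intro sum_pmf_eq_1) auto
    finally show ?thesis .
  qed
  have F'm: "F' m = 1"
  proof -
    have "F' m = (\<Sum>u\<in>x ` {..<m}. pmf \<nu>' u)" unfolding F'_def using inj by (simp add: sum.reindex)
    also have "\<dots> = 1" using s2 by (intro sum_pmf_eq_1) auto
    finally show ?thesis .
  qed
  have Fle: "0 \<le> F j" "F j \<le> F (Suc j)" "0 \<le> F' j" "F' j \<le> F' (Suc j)" for j
    using monoF monoF' F0 by (auto simp: mono_def) (metis le0)+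
  have Fle1: "F j \<le> 1" "F' j \<le> 1" if "j \<le> m" for j
    using monoF monoF' Fm F'm that by (auto simp: mono_def) metis+
  define g where "g = (\<lambda>(i,j). if i < m \<and> j < m then ov (F i) (F (Suc i)) (F' j) (F' (Suc j)) else 0)"
  define A where "A = {..<m} \<times> {..<m}"
  have finA: "finite A" by (simp add: A_def)
  have gnn: "0 \<le> g p" for p by (auto simp: g_def ov_nonneg split: prod.splits)
  have g0: "g p = 0" if "p \<notin> A" for p using that by (auto simp: g_def A_def split: prod.splits)
  have T: "(\<Sum>i<a. \<Sum>j<b. g (i,j)) = min (F a) (F' b)" if "a \<le> m" "b \<le> m" for a b
  proof -
    have "(\<Sum>i<a. \<Sum>j<b. g (i,j)) = (\<Sum>i<a. \<Sum>j<b. ov (F i) (F (Suc i)) (F' j) (F' (Suc j)))"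
      using that by (intro sum.cong refl) (auto simp: g_def)
    also have "\<dots> = (\<Sum>i<a. ov (F i) (F (Suc i)) (F' 0) (F' b))"
      using monoF' Fle by (intro sum.cong refl ov_tele) auto
    also have "\<dots> = (\<Sum>i<a. ov (F' 0) (F' b) (F i) (F (Suc i)))" by (simp add: ov_sym)
    also have "\<dots> = ov (F' 0) (F' b) (F 0) (F a)"
      using monoF Fle F0 by (intro ov_tele) (auto simp: mono_def)
    also have "\<dots> = min (F a) (F' b)" using F0 Fle[of a] Fle[of b] monoF monoF'
      by (auto simp: ov_def mono_def)
    finally show ?thesis .
  qed
  have sumg: "(\<Sum>p\<in>A. g p) = 1"
    using T[of m m] Fm F'm by (simp add: A_def sum.cartesian_product)
  have nn: "(\<integral>\<^sup>+p. ennreal (g p) \<partial>count_space UNIV) = 1"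
  proof -
    have "(\<integral>\<^sup>+p. ennreal (g p) \<partial>count_space UNIV) = (\<Sum>p\<in>A. ennreal (g p))"
      using finA g0 by (intro nn_integral_count_space') auto
    also have "\<dots> = ennreal (\<Sum>p\<in>A. g p)" using gnn by (simp add: sum_ennreal)
    finally show ?thesis using sumg by simp
  qed
  define q where "q = embed_pmf g"
  have pq: "pmf q p = g p" for p unfolding q_def using gnn nn by (intro pmf_embed_pmf) auto
  have sq: "set_pmf q \<subseteq> A" using g0 by (auto simp: set_pmf_eq pq)
  define c where "c = map_pmf (\<lambda>(i,j). (x i, x j)) q"
  have row: "(\<Sum>j<m. g (i,j)) = pmf \<nu> (x i)" if "i < m" for i
  proof -
    have "(\<Sum>j<m. g (i,j)) = (\<Sum>j<m. ov (F i) (F (Suc i)) (F' j) (F' (Suc j)))"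
      using that by (intro sum.cong refl) (auto simp: g_def)
    also have "\<dots> = ov (F i) (F (Suc i)) (F' 0) (F' m)" using monoF' Fle by (intro ov_tele) auto
    also have "\<dots> = F (Suc i) - F i" using F0 F'm Fle[of i] Fle1[of "Suc i"] that by (auto simp: ov_def)
    also have "\<dots> = pmf \<nu> (x i)" by (simp add: F_def)
    finally show ?thesis .
  qed
  have col: "(\<Sum>i<m. g (i,j)) = pmf \<nu>' (x j)" if "j < m" for j
  proof -
    have "(\<Sum>i<m. g (i,j)) = (\<Sum>i<m. ov (F' j) (F' (Suc j)) (F i) (F (Suc i)))"
      using that by (intro sum.cong refl) (auto simp: g_def ov_sym)
    also have "\<dots> = ov (F' j) (F' (Suc j)) (F 0) (F m)" using monoF Fle by (intro ov_tele) auto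
    also have "\<dots> = F' (Suc j) - F' j" using F0 Fm Fle[of j] Fle1[of "Suc j"] that by (auto simp: ov_def)
    also have "\<dots> = pmf \<nu>' (x j)" by (simp add: F'_def)
    finally show ?thesis .
  qed
  have m1: "map_pmf fst c = \<nu>"
  proof (rule pmf_eqI)
    fix u
    have "pmf (map_pmf fst c) u = pmf (map_pmf (\<lambda>p. x (fst p)) q) u"
      by (simp add: c_def map_pmf_comp case_prod_beta)
    also have "\<dots> = (\<Sum>p\<in>{p\<in>A. x (fst p) = u}. g p)"
      using finA sq by (simp add: pmf_map_finite pq)
    also have "\<dots> = pmf \<nu> u"
    proof (cases "u \<in> x ` {..<m}")
      case True
      then obtain i where i: "i < m" "u = x i" by auto
      have "{p\<in>A. x (fst p) = u} = {i} \<times> {..<m}" using i inj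
        by (auto simp: A_def inj_on_def)
      moreover have "sum g ({i} \<times> {..<m}) = (\<Sum>j<m. g (i,j))"
      proof -
        have "{i} \<times> {..<m} = Pair i ` {..<m}" by auto
        then show ?thesis by (simp add: sum.reindex inj_on_def)
      qed
      ultimately show ?thesis using row[OF i(1)] i by simp
    next
      case False
      then have "{p\<in>A. x (fst p) = u} = {}" by (auto simp: A_def)
      moreover have "pmf \<nu> u = 0" using False s1 by (auto simp: set_pmf_eq)
      ultimately show ?thesis by (metis sum.empty)
    qed
    finally show "pmf (map_pmf fst c) u = pmf \<nu> u" .
  qed
  have m2: "map_pmf snd c = \<nu>'"
  proof (rule pmf_eqI)
    fix u
    have "pmf (map_pmf snd c) u = pmf (map_pmf (\<lambda>p. x (snd p)) q) u"
      by (simp add: c_def map_pmf_comp case_prod_beta)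
    also have "\<dots> = (\<Sum>p\<in>{p\<in>A. x (snd p) = u}. g p)"
      using finA sq by (simp add: pmf_map_finite pq)
    also have "\<dots> = pmf \<nu>' u"
    proof (cases "u \<in> x ` {..<m}")
      case True
      then obtain j where j: "j < m" "u = x j" by auto
      have "{p\<in>A. x (snd p) = u} = {..<m} \<times> {j}" using j inj
        by (auto simp: A_def inj_on_def)
      moreover have "sum g ({..<m} \<times> {j}) = (\<Sum>i<m. g (i,j))"
      proof -
        have "{..<m} \<times> {j} = (\<lambda>a. (a,j)) ` {..<m}" by auto
        then show ?thesis by (simp add: sum.reindex inj_on_def)
      qed
      ultimately show ?thesis using col[OF j(1)] j by simp
    next
      case False
      then have "{p\<in>A. x (snd p) = u} = {}" by (auto simp: A_def)
      moreover have "pmf \<nu>' u = 0" using False s2 by (auto simp: set_pmf_eq)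
      ultimately show ?thesis by (metis sum.empty)
    qed
    finally show "pmf (map_pmf snd c) u = pmf \<nu>' u" .
  qed
  have cc: "c \<in> couplings \<nu> \<nu>'" using m1 m2 by (simp add: couplings_def)
  have cost: "measure_pmf.expectation c (\<lambda>(a, b). \<bar>a - b\<bar>) = (\<Sum>p\<in>A. g p * \<bar>x (fst p) - x (snd p)\<bar>)"
  proof -
    have "measure_pmf.expectation c (\<lambda>(a, b). \<bar>a - b\<bar>) = measure_pmf.expectation q (\<lambda>p. \<bar>x (fst p) - x (snd p)\<bar>)"
      by (simp add: c_def case_prod_beta)
    also have "\<dots> = (\<Sum>p\<in>A. \<bar>x (fst p) - x (snd p)\<bar> * pmf q p)"
      using finA sq by (intro integral_measure_pmf_real) auto
    finally show ?thesis by (simp add: pq mult.commute)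
  qed
  define e where "e = (\<lambda>l i j. if (i \<le> (l::nat)) \<noteq> (j \<le> l) then 1 else (0::real))"
  have inner: "(\<Sum>i<m. \<Sum>j<m. g (i,j) * e l i j) = \<bar>F (Suc l) - F' (Suc l)\<bar>" if "l < m - 1" for l
  proof -
    have e_eq: "e l i j = (if i < Suc l then 1 else 0) + (if j < Suc l then 1 else 0)
        - 2 * ((if i < Suc l then 1 else 0) * (if j < Suc l then 1 else 0))" for i j
      by (auto simp: e_def)
    have s1': "(\<Sum>i<m. \<Sum>j<m. g (i,j) * (if i < Suc l then 1 else 0)) = (\<Sum>i<Suc l. \<Sum>j<m. g (i,j))"
    proof -
      have "(\<Sum>i<m. \<Sum>j<m. g (i,j) * (if i < Suc l then 1 else 0)) = (\<Sum>i<m. (if i < Suc l then 1 else 0) * (\<Sum>j<m. g (i,j)))"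
        by (simp add: sum_distrib_left mult.commute)
      also have "\<dots> = (\<Sum>i\<in>{i\<in>{..<m}. i < Suc l}. \<Sum>j<m. g (i,j))"
        by (rule sum_ind) simp
      also have "{i\<in>{..<m}. i < Suc l} = {..<Suc l}" using that by auto
      finally show ?thesis .
    qed
    have s2': "(\<Sum>i<m. \<Sum>j<m. g (i,j) * (if j < Suc l then 1 else 0)) = (\<Sum>i<m. \<Sum>j<Suc l. g (i,j))"
    proof -
      have "(\<Sum>i<m. \<Sum>j<m. g (i,j) * (if j < Suc l then 1 else 0)) = (\<Sum>i<m. \<Sum>j\<in>{j\<in>{..<m}. j < Suc l}. g (i,j))"
        by (rule sum.cong[OF refl]) (simp add: mult.commute[of "g _"] sum_ind)
      also have "{j\<in>{..<m}. j < Suc l} = {..<Suc l}" using that by auto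
      finally show ?thesis .
    qed
    have s3': "(\<Sum>i<m. \<Sum>j<m. g (i,j) * ((if i < Suc l then 1 else 0) * (if j < Suc l then 1 else 0))) = (\<Sum>i<Suc l. \<Sum>j<Suc l. g (i,j))"
    proof -
      have "(\<Sum>i<m. \<Sum>j<m. g (i,j) * ((if i < Suc l then 1 else 0) * (if j < Suc l then 1 else 0)))
          = (\<Sum>i<m. (if i < Suc l then 1 else 0) * (\<Sum>j<m. g (i,j) * (if j < Suc l then 1 else 0)))"
        by (simp add: sum_distrib_left mult_ac)
      also have "\<dots> = (\<Sum>i\<in>{i\<in>{..<m}. i < Suc l}. (\<Sum>j<m. g (i,j) * (if j < Suc l then 1 else 0)))"
        by (rule sum_ind) simp
      also have "\<dots> = (\<Sum>i\<in>{i\<in>{..<m}. i < Suc l}. \<Sum>j\<in>{j\<in>{..<m}. j < Suc l}. g (i,j))"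
        by (rule sum.cong[OF refl]) (simp add: mult.commute[of "g _"] sum_ind)
      also have "{i\<in>{..<m}. i < Suc l} = {..<Suc l}" using that by auto
      finally show ?thesis by simp
    qed
    have "(\<Sum>i<m. \<Sum>j<m. g (i,j) * e l i j)
        = (\<Sum>i<m. \<Sum>j<m. g (i,j) * (if i < Suc l then 1 else 0))
        + (\<Sum>i<m. \<Sum>j<m. g (i,j) * (if j < Suc l then 1 else 0))
        - 2 * (\<Sum>i<m. \<Sum>j<m. g (i,j) * ((if i < Suc l then 1 else 0) * (if j < Suc l then 1 else 0)))"
      unfolding e_eq by (simp add: algebra_simps sum.distrib sum_subtractf sum_distrib_left)
    also have "\<dots> = min (F (Suc l)) (F' m) + min (F m) (F' (Suc l)) - 2 * min (F (Suc l)) (F' (Suc l))"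
      using that T[of "Suc l" m] T[of m "Suc l"] T[of "Suc l" "Suc l"] unfolding s1' s2' s3' by simp
    also have "\<dots> = \<bar>F (Suc l) - F' (Suc l)\<bar>"
      using Fm F'm Fle1[of "Suc l"] that by (auto simp: min_def)
    finally show ?thesis .
  qed
  have "W1 \<nu> \<nu>' \<le> measure_pmf.expectation c (\<lambda>(a, b). \<bar>a - b\<bar>)"
    unfolding W1_def
  proof (rule cInf_lower)
    show "measure_pmf.expectation c (\<lambda>(a, b). \<bar>a - b\<bar>) \<in> (\<lambda>c. measure_pmf.expectation c (\<lambda>(x, y). \<bar>x - y\<bar>)) ` couplings \<nu> \<nu>'"
      using cc by blast
    show "bdd_below ((\<lambda>c. measure_pmf.expectation c (\<lambda>(x, y). \<bar>x - y\<bar>)) ` couplings \<nu> \<nu>')"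
      by (rule bdd_belowI[of _ 0]) (auto intro!: integral_nonneg_AE)
  qed
  also have "\<dots> = (\<Sum>i<m. \<Sum>j<m. g (i,j) * \<bar>x i - x j\<bar>)"
    using cost by (simp add: A_def sum.cartesian_product case_prod_beta')
  also have "\<dots> \<le> (\<Sum>i<m. \<Sum>j<m. g (i,j) * (\<Sum>l<m-1. \<bar>x (Suc l) - x l\<bar> * e l i j))"
    unfolding e_def by (intro sum_mono mult_left_mono abs_diff_tele gnn) auto
  also have "\<dots> = (\<Sum>l<m-1. \<bar>x (Suc l) - x l\<bar> * (\<Sum>i<m. \<Sum>j<m. g (i,j) * e l i j))"
  proof -
    have sw: "(\<Sum>i<m. \<Sum>j<m. \<Sum>l<m-1. f i j l) = (\<Sum>l<m-1. \<Sum>i<m. \<Sum>j<m. f i j l)" for f :: "nat \<Rightarrow> nat \<Rightarrow> nat \<Rightarrow> real"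
    proof -
      have "(\<Sum>i<m. \<Sum>j<m. \<Sum>l<m-1. f i j l) = (\<Sum>i<m. \<Sum>l<m-1. \<Sum>j<m. f i j l)"
        by (rule sum.cong[OF refl], rule sum.swap)
      also have "\<dots> = (\<Sum>l<m-1. \<Sum>i<m. \<Sum>j<m. f i j l)" by (rule sum.swap)
      finally show ?thesis .
    qed
    show ?thesis using sw[of "\<lambda>i j l. e l i j * (g (i, j) * \<bar>x (Suc l) - x l\<bar>)"]
      by (simp add: sum_distrib_left sum_distrib_right mult_ac)
  qed
  also have "\<dots> = (\<Sum>l<m-1. \<bar>x (Suc l) - x l\<bar> * \<bar>F (Suc l) - F' (Suc l)\<bar>)"
    by (intro sum.cong refl) (simp add: inner)
  finally show ?thesis .
qed



lemma antideriv_exists: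
  fixes p :: "real poly"
  shows "\<exists>P. pderiv P = p \<and> coeff P 0 = 0 \<and> (\<forall>i. coeff P (Suc i) = coeff p i / real (Suc i))"
proof -
  define P where "P = pCons 0 (Poly (map (\<lambda>i. coeff p i / real (Suc i)) [0..<Suc (degree p)]))"
  have cs: "coeff P (Suc i) = coeff p i / real (Suc i)" for i
  proof (cases "i < Suc (degree p)")
    case True then show ?thesis by (simp add: P_def nth_default_def del: upt_Suc)
  next
    case False then have "coeff p i = 0" by (intro coeff_eq_0) auto
    then show ?thesis using False by (simp add: P_def nth_default_def)
  qed
  have c0: "coeff P 0 = 0" by (simp add: P_def)
  have "pderiv P = p"
    by (rule poly_eqI) (simp add: coeff_pderiv cs)
  then show ?thesis using cs c0 by blast
qed

lemma prod_lin_coeffs: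
  fixes z :: "'a \<Rightarrow> real"
  assumes "finite A" "\<forall>a\<in>A. \<bar>z a\<bar> \<le> 1"
  shows "(\<forall>i>card A. coeff (\<Prod>a\<in>A. [:- z a, 1:]) i = 0) \<and>
         (\<forall>n. (\<Sum>i\<le>n. \<bar>coeff (\<Prod>a\<in>A. [:- z a, 1:]) i\<bar>) \<le> 2 ^ card A)"
  using assms
proof (induction A rule: finite_induct)
  case empty
  show ?case
  proof (intro conjI allI impI)
    fix i :: nat assume "i > card {}" then show "coeff (\<Prod>a\<in>{}. [:- z a, 1:]) i = 0" by (simp add: coeff_1)
  next
    fix n
    have "(\<Sum>i\<le>n. \<bar>coeff (1::real poly) i\<bar>) = (\<Sum>i\<le>n. if i = 0 then 1 else 0)"
      by (intro sum.cong) (auto simp: coeff_1)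
    also have "\<dots> = 1" by simp
    finally show "(\<Sum>i\<le>n. \<bar>coeff (\<Prod>a\<in>{}. [:- z a, 1:]) i\<bar>) \<le> 2 ^ card {}" by simp
  qed
next
  case (insert b A)
  define q where "q = (\<Prod>a\<in>A. [:- z a, 1:])"
  have IH1: "\<forall>i>card A. coeff q i = 0" and IH2: "\<forall>n. (\<Sum>i\<le>n. \<bar>coeff q i\<bar>) \<le> 2 ^ card A"
    using insert unfolding q_def by auto
  have zb: "\<bar>z b\<bar> \<le> 1" using insert by auto
  have eq: "(\<Prod>a\<in>insert b A. [:- z a, 1:]) = smult (- z b) q + pCons 0 q"
    using insert by (simp add: q_def)
  have co: "coeff (\<Prod>a\<in>insert b A. [:- z a, 1:]) i = - z b * coeff q i + (if i = 0 then 0 else coeff q (i - 1))" for i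
    unfolding eq by (simp add: coeff_pCons' )
  show ?case
  proof (intro conjI allI impI)
    fix i assume "i > card (insert b A)"
    then have "i > card A" "i - 1 > card A" "i \<noteq> 0" using insert by auto
    then show "coeff (\<Prod>a\<in>insert b A. [:- z a, 1:]) i = 0" using IH1 co by simp
  next
    fix n
    have "(\<Sum>i\<le>n. \<bar>coeff (\<Prod>a\<in>insert b A. [:- z a, 1:]) i\<bar>)
       \<le> (\<Sum>i\<le>n. \<bar>coeff q i\<bar> + \<bar>if i = 0 then 0 else coeff q (i - 1)\<bar>)"
    proof (rule sum_mono)
      fix i
      have "\<bar>- z b * coeff q i\<bar> \<le> \<bar>coeff q i\<bar>" using zb
        by (simp add: abs_mult mult_left_le_one_le)
      then show "\<bar>coeff (\<Prod>a\<in>insert b A. [:- z a, 1:]) i\<bar> \<le> \<bar>coeff q i\<bar> + \<bar>if i = 0 then 0 else coeff q (i - 1)\<bar>"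
        unfolding co by linarith
    qed
    also have "\<dots> = (\<Sum>i\<le>n. \<bar>coeff q i\<bar>) + (\<Sum>i\<le>n. \<bar>if i = 0 then 0 else coeff q (i - 1)\<bar>)"
      by (simp add: sum.distrib)
    also have "(\<Sum>i\<le>n. \<bar>if i = 0 then 0 else coeff q (i - 1)\<bar>) \<le> 2 ^ card A"
    proof (cases n)
      case 0 then show ?thesis by simp
    next
      case (Suc n')
      have "(\<Sum>i\<le>n. \<bar>if i = 0 then 0 else coeff q (i - 1)\<bar>) = (\<Sum>i\<le>n'. \<bar>coeff q i\<bar>)"
        unfolding Suc by (subst sum.atMost_Suc_shift) simp
      then show ?thesis using IH2 by simp
    qed
    finally show "(\<Sum>i\<le>n. \<bar>coeff (\<Prod>a\<in>insert b A. [:- z a, 1:]) i\<bar>) \<le> 2 ^ card (insert b A)"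
      using IH2[rule_format, of n] insert by simp
  qed
qed

lemma prod_sign:
  fixes z :: "'a \<Rightarrow> real"
  assumes "finite A"
  shows "(\<Prod>a\<in>A. t - z a) = (-1) ^ card {a\<in>A. t < z a} * (\<Prod>a\<in>A. \<bar>t - z a\<bar>)"
  using assms
proof (induction A rule: finite_induct)
  case empty then show ?case by simp
next
  case (insert b A)
  show ?case
  proof (cases "t < z b")
    case True
    then have "{a\<in>insert b A. t < z a} = insert b {a\<in>A. t < z a}" by auto
    moreover have "b \<notin> {a\<in>A. t < z a}" using insert by auto
    ultimately show ?thesis using insert True by (simp add: abs_if algebra_simps)
  next
    case False
    then have "{a\<in>insert b A. t < z a} = {a\<in>A. t < z a}" by auto
    then show ?thesis using insert False by (simp add: abs_if)
  qed
qed

lemma abel: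
  fixes w y :: "nat \<Rightarrow> real"
  shows "(\<Sum>i<Suc n. w i * y i) = (\<Sum>i<Suc n. w i) * y n - (\<Sum>l<n. (\<Sum>i<Suc l. w i) * (y (Suc l) - y l))"
  by (induction n) (simp_all add: algebra_simps)



lemma interval_lower:
  fixes f f' :: "real \<Rightarrow> real"
  assumes ab: "a < b" and der: "\<And>t. DERIV f t :> f' t"
    and pos: "\<And>t. a < t \<Longrightarrow> t < b \<Longrightarrow> 0 \<le> f' t"
    and low: "\<And>t. a + (b-a)/4 \<le> t \<Longrightarrow> t \<le> b - (b-a)/4 \<Longrightarrow> c \<le> f' t"
  shows "(b - a)/2 * c \<le> f b - f a"
proof -
  define a' where "a' = a + (b-a)/4"
  define b' where "b' = b - (b-a)/4"
  have o: "a < a'" "a' < b'" "b' < b" using ab by (auto simp: a'_def b'_def field_simps)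
  obtain z1 where z1: "a < z1" "z1 < a'" "f a' - f a = (a' - a) * f' z1"
    using MVT2[OF o(1) der] by blast
  obtain z2 where z2: "a' < z2" "z2 < b'" "f b' - f a' = (b' - a') * f' z2"
    using MVT2[OF o(2) der] by blast
  obtain z3 where z3: "b' < z3" "z3 < b" "f b - f b' = (b - b') * f' z3"
    using MVT2[OF o(3) der] by blast
  have "0 \<le> (a' - a) * f' z1" using z1 o by (intro mult_nonneg_nonneg pos) auto
  moreover have "0 \<le> (b - b') * f' z3" using z3 o by (intro mult_nonneg_nonneg pos) auto
  moreover have "(b' - a') * c \<le> (b' - a') * f' z2" using z2 o
    by (intro mult_left_mono low) (auto simp: a'_def b'_def)
  moreover have "(b - a)/2 * c = (b' - a') * c" unfolding a'_def b'_def by (simp add: field_simps)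
  ultimately show ?thesis using z1 z2 z3 by linarith
qed

lemma main_bound:
  fixes x w :: "nat \<Rightarrow> real" and N m l :: nat and \<delta> :: real
  assumes xmono: "\<And>i j. i < j \<Longrightarrow> j < m \<Longrightarrow> x i < x j"
    and xr: "\<And>i. i < m \<Longrightarrow> \<bar>x i\<bar> \<le> 1"
    and wsum: "(\<Sum>i<m. w i) = 0"
    and mom: "\<And>r. 1 \<le> r \<Longrightarrow> r \<le> N \<Longrightarrow> \<bar>\<Sum>i<m. w i * x i ^ r\<bar> \<le> \<delta>"
    and mN: "m \<le> N + 1"
    and l: "Suc l < m"
  shows "\<bar>\<Sum>i<Suc l. w i\<bar> * ((x (Suc l) - x l) / 2) * ((x (Suc l) - x l) / 4) ^ (m - 2) \<le> 2 ^ (m - 2) * \<delta>"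
proof -
  define H where "H j = (\<Sum>i<j. w i)" for j
  define L where "L = m - 1"
  have L: "m = Suc L" "l < L" using l by (auto simp: L_def)
  have LN: "L \<le> N" "1 \<le> L" using mN L by auto
  define sg where "sg g = (if g \<ge> 0 then 1 else -1::real)" for g :: real
  have sgH: "H j = \<bar>H j\<bar> * sg (H j)" for j by (simp add: sg_def)
  have sg2: "sg g * sg g = 1" for g by (simp add: sg_def)
  define Z where "Z = {i. 1 \<le> i \<and> i < L \<and> sg (H i) \<noteq> sg (H (Suc i))}"
  define \<sigma> where "\<sigma> = sg (H L)"
  have Zsub: "Z \<subseteq> {1..<L}" by (auto simp: Z_def)
  have finZ: "finite Z" using Zsub finite_subset by blast
  have cardZ: "card Z \<le> L - 1" using card_mono[OF _ Zsub] by simp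
  have sgn_rel: "sg (H (Suc l')) = \<sigma> * (-1) ^ card {i\<in>Z. l' < i}" if "l' < L" for l'
  proof -
    have "l' \<le> L - 1" using that by simp
    then show ?thesis
    proof (induction rule: inc_induct)
      case base
      have e: "{i\<in>Z. L - 1 < i} = {}" using Zsub by auto
      have "Suc (L - 1) = L" using LN by simp
      then show ?case unfolding e by (simp add: \<sigma>_def)
    next
      case (step n)
      show ?case
      proof (cases "Suc n \<in> Z")
        case True
        have e: "{i\<in>Z. n < i} = insert (Suc n) {i\<in>Z. Suc n < i}" using True by auto
        have c: "card {i\<in>Z. n < i} = Suc (card {i\<in>Z. Suc n < i})"
          unfolding e using finZ by (subst card_insert_disjoint) auto
        have "sg (H (Suc n)) \<noteq> sg (H (Suc (Suc n)))" using True by (simp add: Z_def)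
        then have "sg (H (Suc n)) = - sg (H (Suc (Suc n)))"
          by (cases "0 \<le> H (Suc n)"; cases "0 \<le> H (Suc (Suc n))") (simp_all add: sg_def)
        then show ?thesis using step.IH c by simp
      next
        case False
        have e: "{i\<in>Z. n < i} = {i\<in>Z. Suc n < i}" using False by (auto intro: Suc_lessI)
        have "sg (H (Suc n)) = sg (H (Suc (Suc n)))" using False step.hyps by (simp add: Z_def)
        then show ?thesis using step.IH e by simp
      qed
    qed
  qed
  have sig: "\<bar>\<sigma>\<bar> = 1" by (simp add: \<sigma>_def sg_def)
  define q where "q = (\<Prod>i\<in>Z. [:- x i, 1:])"
  define p where "p = smult \<sigma> q"
  have qc: "(\<forall>i>card Z. coeff q i = 0) \<and> (\<forall>n. (\<Sum>i\<le>n. \<bar>coeff q i\<bar>) \<le> 2 ^ card Z)"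
    unfolding q_def using finZ Zsub L by (intro prod_lin_coeffs) (auto intro!: xr)
  have pc1: "coeff p i = 0" if "i > card Z" for i using qc that by (simp add: p_def)
  have pc2: "(\<Sum>i\<le>n. \<bar>coeff p i\<bar>) \<le> 2 ^ card Z" for n
    using qc sig by (simp add: p_def abs_mult)
  obtain P where P: "pderiv P = p" "coeff P 0 = 0" "\<And>i. coeff P (Suc i) = coeff p i / real (Suc i)"
    using antideriv_exists[of p] by blast
  obtain N' where N': "N = Suc N'" using LN by (cases N) auto
  have Pc1: "coeff P i = 0" if iN: "i > N" for i
  proof -
    obtain j where j: "i = Suc j" using iN by (cases i) auto
    have "j > card Z" using j iN cardZ LN by simp
    then show ?thesis using j P(3) pc1 by simp
  qed
  have PcN: "(\<Sum>i\<le>N. \<bar>coeff P i\<bar>) \<le> 2 ^ card Z"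
  proof -
    have "(\<Sum>i\<le>N. \<bar>coeff P i\<bar>) = (\<Sum>i\<le>N'. \<bar>coeff p i\<bar> / real (Suc i))"
      unfolding N' by (subst sum.atMost_Suc_shift) (simp add: P)
    also have "\<dots> \<le> (\<Sum>i\<le>N'. \<bar>coeff p i\<bar>)"
      by (intro sum_mono) (simp add: divide_le_eq algebra_simps)
    also have "\<dots> \<le> 2 ^ card Z" by (rule pc2)
    finally show ?thesis .
  qed
  have polyP: "poly P y = (\<Sum>r\<le>N. coeff P r * y ^ r)" for y
  proof -
    have dP: "degree P \<le> N" using Pc1 by (intro degree_le) auto
    have "poly P y = (\<Sum>r\<le>degree P. coeff P r * y ^ r)" by (rule poly_altdef)
    also have "\<dots> = (\<Sum>r\<le>N. coeff P r * y ^ r)"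
      using dP by (intro sum.mono_neutral_left) (auto simp: coeff_eq_0)
    finally show ?thesis .
  qed
  have dpos: "0 \<le> \<delta>" using mom[of 1] LN by (meson abs_ge_zero order_trans le_refl)
  have sumbound: "\<bar>\<Sum>i<m. w i * poly P (x i)\<bar> \<le> 2 ^ card Z * \<delta>"
  proof -
    have "(\<Sum>i<m. w i * poly P (x i)) = (\<Sum>i<m. \<Sum>r\<le>N. w i * (coeff P r * x i ^ r))"
      by (simp add: polyP sum_distrib_left)
    also have "\<dots> = (\<Sum>r\<le>N. \<Sum>i<m. w i * (coeff P r * x i ^ r))"
      by (rule sum.swap)
    also have "\<dots> = (\<Sum>r\<le>N. coeff P r * (\<Sum>i<m. w i * x i ^ r))"
      by (simp add: sum_distrib_left mult_ac)
    also have "\<bar>\<dots>\<bar> \<le> (\<Sum>r\<le>N. \<bar>coeff P r\<bar> * \<delta>)"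
    proof -
      have "\<bar>\<Sum>r\<le>N. coeff P r * (\<Sum>i<m. w i * x i ^ r)\<bar> \<le> (\<Sum>r\<le>N. \<bar>coeff P r * (\<Sum>i<m. w i * x i ^ r)\<bar>)"
        by (rule sum_abs)
      also have "\<dots> \<le> (\<Sum>r\<le>N. \<bar>coeff P r\<bar> * \<delta>)"
      proof (rule sum_mono)
        fix r assume r: "r \<in> {..N}"
        show "\<bar>coeff P r * (\<Sum>i<m. w i * x i ^ r)\<bar> \<le> \<bar>coeff P r\<bar> * \<delta>"
        proof (cases "r = 0")
          case True then show ?thesis using P(2) by simp
        next
          case False
          then show ?thesis using r mom[of r] by (simp add: abs_mult mult_left_mono)
        qed
      qed
      finally show ?thesis .
    qed
    also have "\<dots> = (\<Sum>r\<le>N. \<bar>coeff P r\<bar>) * \<delta>" by (simp add: sum_distrib_right)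
    also have "\<dots> \<le> 2 ^ card Z * \<delta>" using PcN dpos by (rule mult_right_mono)
    finally show ?thesis .
  qed
  define D where "D l' = H (Suc l') * (poly P (x (Suc l')) - poly P (x l'))" for l'
  have abelP: "(\<Sum>i<m. w i * poly P (x i)) = - (\<Sum>l'<L. D l')"
    using abel[of w "\<lambda>i. poly P (x i)" L] wsum by (simp add: L D_def H_def)
  have Dlow: "\<bar>H (Suc l')\<bar> * ((x (Suc l') - x l') / 2 * ((x (Suc l') - x l') / 4) ^ card Z) \<le> D l'"
    if l': "l' < L" for l'
  proof -
    define a where "a = x l'"
    define b where "b = x (Suc l')"
    define s where "s = sg (H (Suc l'))"
    have ab: "a < b" using xmono[of l' "Suc l'"] l' L by (simp add: a_def b_def)
    have ppoly: "s * poly p t = (\<Prod>i\<in>Z. \<bar>t - x i\<bar>)" if "a < t" "t < b" for t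
    proof -
      have set: "{i\<in>Z. t < x i} = {i\<in>Z. l' < i}"
      proof (intro Collect_cong conj_cong refl iffI)
        fix i assume "i \<in> Z" "t < x i"
        show "l' < i"
        proof (rule ccontr)
          assume "\<not> l' < i"
          then have "x i \<le> x l'" using xmono[of i l'] l' L by (cases "i = l'") auto
          then show False using \<open>t < x i\<close> that by (simp add: a_def)
        qed
      next
        fix i assume "i \<in> Z" "l' < i"
        then have "x (Suc l') \<le> x i" using xmono[of "Suc l'" i] Zsub L by (cases "i = Suc l'") auto
        then show "t < x i" using that by (simp add: b_def)
      qed
      have "s * poly p t = s * \<sigma> * (\<Prod>i\<in>Z. t - x i)"
        by (simp add: p_def q_def poly_prod)
      also have "\<dots> = s * \<sigma> * (-1) ^ card {i\<in>Z. l' < i} * (\<Prod>i\<in>Z. \<bar>t - x i\<bar>)"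
        using prod_sign[OF finZ, of t x] set by simp
      also have "s * \<sigma> * (-1) ^ card {i\<in>Z. l' < i} = s * s"
        using sgn_rel[OF l'] by (simp add: s_def mult.assoc)
      finally show ?thesis using sg2 by (simp add: s_def)
    qed
    have der: "DERIV (\<lambda>t. s * poly P t) t :> s * poly p t" for t
      using poly_DERIV[of P t] P(1) by (auto intro!: derivative_eq_intros)
    have low: "((b - a)/4) ^ card Z \<le> s * poly p t" if "a + (b-a)/4 \<le> t" "t \<le> b - (b-a)/4" for t
    proof -
      have "((b - a)/4) ^ card Z = (\<Prod>i\<in>Z. (b - a)/4)" by simp
      also have "\<dots> \<le> (\<Prod>i\<in>Z. \<bar>t - x i\<bar>)"
      proof (rule prod_mono)
        fix i assume i: "i \<in> Z"
        have "x i \<le> a \<or> b \<le> x i"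
        proof (cases "i \<le> l'")
          case True then show ?thesis using xmono[of i l'] l' L by (cases "i = l'") (auto simp: a_def)
        next
          case False then show ?thesis using xmono[of "Suc l'" i] i Zsub L
            by (cases "i = Suc l'") (auto simp: b_def)
        qed
        note xi = this
        show "0 \<le> (b - a) / 4 \<and> (b - a) / 4 \<le> \<bar>t - x i\<bar>" 
        proof (rule conjI)
          show "0 \<le> (b - a) / 4" using ab by simp
          show "(b - a) / 4 \<le> \<bar>t - x i\<bar>"
          proof (cases "x i \<le> a")
            case True then have "(b - a) / 4 \<le> t - x i" using that by linarith
            then show ?thesis by linarith
          next
            case False then have "b \<le> x i" using xi by simp
            then have "(b - a) / 4 \<le> x i - t" using that by linarith
            then show ?thesis by linarith
          qed
        qed
      qed
      also have "\<dots> = s * poly p t"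
      proof -
        have q4: "0 < (b - a) / 4" using ab by simp
        have "a < t" using that q4 by linarith
        moreover have "t < b" using that q4 by linarith
        ultimately show ?thesis using ppoly[of t] by simp
      qed
      finally show ?thesis .
    qed
    have "(b - a)/2 * ((b - a)/4) ^ card Z \<le> s * poly P b - s * poly P a"
    proof (rule interval_lower[OF ab der])
      fix t assume "a < t" "t < b"
      then show "0 \<le> s * poly p t" using ppoly by (auto intro: prod_nonneg)
    next
      fix t assume "a + (b - a) / 4 \<le> t" "t \<le> b - (b - a) / 4"
      then show "((b - a)/4) ^ card Z \<le> s * poly p t" by (rule low)
    qed
    then have "\<bar>H (Suc l')\<bar> * ((b - a)/2 * ((b - a)/4) ^ card Z) \<le> \<bar>H (Suc l')\<bar> * (s * poly P b - s * poly P a)"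
      by (intro mult_left_mono) auto
    also have "\<dots> = (\<bar>H (Suc l')\<bar> * s) * (poly P b - poly P a)"
      by (simp add: algebra_simps)
    also have "\<dots> = D l'" unfolding D_def s_def a_def b_def using sgH[of "Suc l'"] by simp
    finally show ?thesis by (simp add: a_def b_def)
  qed
  have Dnn: "0 \<le> D l'" if "l' < L" for l'
  proof -
    have "x l' < x (Suc l')" using xmono[of l' "Suc l'"] that L by simp
    then have "0 \<le> \<bar>H (Suc l')\<bar> * ((x (Suc l') - x l') / 2 * ((x (Suc l') - x l') / 4) ^ card Z)" by simp
    then show ?thesis using Dlow[OF that] by linarith
  qed
  have "D l \<le> (\<Sum>l'<L. D l')" using Dnn L by (intro member_le_sum) auto
  also have "\<dots> \<le> 2 ^ card Z * \<delta>" using sumbound abelP by simp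
  finally have main: "\<bar>H (Suc l)\<bar> * ((x (Suc l) - x l) / 2 * ((x (Suc l) - x l) / 4) ^ card Z) \<le> 2 ^ card Z * \<delta>"
    using Dlow[OF L(2)] by linarith
  define h where "h = x (Suc l) - x l"
  have h: "0 < h" "h \<le> 2" using xmono[of l "Suc l"] xr[of l] xr[of "Suc l"] l by (auto simp: h_def)
  have cz: "card Z \<le> m - 2" using cardZ L by simp
  have "(h/4) ^ (m - 2) = (h/4) ^ card Z * (h/4) ^ (m - 2 - card Z)"
  proof -
    have "m - 2 = card Z + (m - 2 - card Z)" using cz by simp
    then show ?thesis by (metis power_add)
  qed
  also have "\<dots> \<le> (h/4) ^ card Z * 1" using h
    by (intro mult_left_mono power_le_one) auto
  finally have p1: "(h/4) ^ (m - 2) \<le> (h/4) ^ card Z" by simp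
  have "\<bar>H (Suc l)\<bar> * (h / 2) * (h / 4) ^ (m - 2) \<le> \<bar>H (Suc l)\<bar> * (h / 2 * (h / 4) ^ card Z)"
    using p1 h by (simp add: mult.assoc mult_left_mono)
  also have "\<dots> \<le> 2 ^ card Z * \<delta>" using main by (simp add: h_def)
  also have "\<dots> \<le> 2 ^ (m - 2) * \<delta>" using cz dpos by (intro mult_right_mono power_increasing) auto
  finally show ?thesis by (simp add: H_def h_def)
qed



lemma final_arith:
  fixes g h \<delta> :: real and n N :: nat
  assumes g: "0 \<le> g" "g \<le> 1" and h: "0 < h" "h \<le> 2" and n: "1 \<le> n" "n \<le> N" and d: "0 \<le> \<delta>"
    and main: "g * (h/2) * (h/4) ^ (n - 1) \<le> 2 ^ (n - 1) * \<delta>"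
  shows "g * h \<le> 8 * \<delta> powr (1 / real N)"
proof -
  obtain e where e: "n = Suc e" using n by (cases n) auto
  have "g * h ^ n = 2 * 4 ^ e * (g * (h/2) * (h/4) ^ (n - 1))"
    by (simp add: e power_divide field_simps)
  also have "\<dots> \<le> 2 * 4 ^ e * (2 ^ e * \<delta>)" using main e by (intro mult_left_mono) auto
  also have "\<dots> = 2 * 8 ^ e * \<delta>" by (simp add: power_mult_distrib[symmetric])
  finally have A: "g * h ^ n \<le> 2 * 8 ^ e * \<delta>" .
  have "g * h ^ N = g * h ^ n * h ^ (N - n)" using n by (simp add: power_add[symmetric])
  also have "\<dots> \<le> (2 * 8 ^ e * \<delta>) * 2 ^ (N - n)"
    using h d by (intro mult_mono[OF A] power_mono) auto
  also have "\<dots> \<le> 8 ^ N * \<delta>"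
  proof -
    have "(2::real) * 8 ^ e * 2 ^ (N - n) = 2 ^ (1 + 3 * e + (N - n))"
      by (simp add: power_add power_mult)
    also have "\<dots> \<le> 2 ^ (3 * N)" using n e by (intro power_increasing) auto
    also have "\<dots> = 8 ^ N" by (simp add: power_mult)
    finally have "(2::real) * 8 ^ e * 2 ^ (N - n) \<le> 8 ^ N" .
    then have "(2 * 8 ^ e * 2 ^ (N - n)) * \<delta> \<le> 8 ^ N * \<delta>" using d by (rule mult_right_mono)
    then show ?thesis by (simp add: mult_ac)
  qed
  finally have B: "g * h ^ N \<le> 8 ^ N * \<delta>" .
  have "(g * h) ^ N = g ^ N * h ^ N" by (simp add: power_mult_distrib)
  also have "\<dots> \<le> g * h ^ N"
    using g h n power_decreasing[of 1 N g] by (intro mult_right_mono) auto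
  finally have C: "(g * h) ^ N \<le> 8 ^ N * \<delta>" using B by linarith
  have Npos: "0 < N" using n by simp
  have "g * h = ((g * h) ^ N) powr (1 / real N)"
  proof (cases "g * h = 0")
    case True then show ?thesis using Npos by (simp only: True) (simp add: power_0_left)
  next
    case False
    then have pos: "0 < g * h" using g h by simp
    then have "((g * h) ^ N) powr (1 / real N) = ((g * h) powr real N) powr (1 / real N)"
      by (simp add: powr_realpow)
    also have "\<dots> = g * h" using Npos pos by (simp add: powr_powr)
    finally show ?thesis by simp
  qed
  also have "\<dots> \<le> (8 ^ N * \<delta>) powr (1 / real N)"
    using C g h by (intro powr_mono2) auto
  also have "\<dots> = (8 ^ N) powr (1 / real N) * \<delta> powr (1 / real N)"
    using d by (simp add: powr_mult)
  also have "(8 ^ N) powr (1 / real N) = (8::real)"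
  proof -
    have "(8::real) ^ N = 8 powr real N" by (simp add: powr_realpow)
    then show ?thesis using Npos by (simp add: powr_powr)
  qed
  finally show ?thesis .
qed



theorem proposition1:
  shows "\<exists>C::real. \<forall>(k::nat) (\<nu>::real pmf) (\<nu>'::real pmf) (\<delta>::real).
     k_atomic k \<nu> \<and> k_atomic k \<nu>' \<and>
     set_pmf \<nu> \<subseteq> {-1..1} \<and> set_pmf \<nu>' \<subseteq> {-1..1} \<and>
     (\<forall>i\<in>{1..2*k-1}. \<bar>moment i \<nu> - moment i \<nu>'\<bar> \<le> \<delta>)
     \<longrightarrow> W1 \<nu> \<nu>' \<le> C * real k * \<delta> powr (1 / (2 * real k - 1))"
proof (intro exI allI impI)
  fix k :: nat and \<nu> \<nu>' :: "real pmf" and \<delta> :: real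
  assume asm: "k_atomic k \<nu> \<and> k_atomic k \<nu>' \<and>
     set_pmf \<nu> \<subseteq> {-1..1} \<and> set_pmf \<nu>' \<subseteq> {-1..1} \<and>
     (\<forall>i\<in>{1..2*k-1}. \<bar>moment i \<nu> - moment i \<nu>'\<bar> \<le> \<delta>)"
  have f1: "finite (set_pmf \<nu>)" "card (set_pmf \<nu>) \<le> k"
    and f2: "finite (set_pmf \<nu>')" "card (set_pmf \<nu>') \<le> k"
    using asm by (auto simp: k_atomic_def)
  have r1: "set_pmf \<nu> \<subseteq> {-1..1}" and r2: "set_pmf \<nu>' \<subseteq> {-1..1}" using asm by auto
  have momd: "\<And>i. 1 \<le> i \<Longrightarrow> i \<le> 2*k-1 \<Longrightarrow> \<bar>moment i \<nu> - moment i \<nu>'\<bar> \<le> \<delta>" using asm by auto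
  have k1: "1 \<le> k"
  proof -
    have "set_pmf \<nu> \<noteq> {}" by (rule set_pmf_not_empty)
    then have "0 < card (set_pmf \<nu>)" using f1(1) by (simp add: card_gt_0_iff)
    then show ?thesis using f1(2) by linarith
  qed
  define N where "N = 2 * k - 1"
  have N1: "1 \<le> N" using k1 by (simp add: N_def)
  have Nr: "real N = 2 * real k - 1" using k1 by (simp add: N_def of_nat_diff)
  have dpos: "0 \<le> \<delta>" using momd[of 1] N1 unfolding N_def by (meson abs_ge_zero order_trans le_refl)
  define S where "S = set_pmf \<nu> \<union> set_pmf \<nu>'"
  have finS: "finite S" using f1 f2 by (simp add: S_def)
  have cardS: "card S \<le> 2 * k"
  proof -
    have "card S \<le> card (set_pmf \<nu>) + card (set_pmf \<nu>')" unfolding S_def by (rule card_Un_le)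
    then show ?thesis using f1 f2 by simp
  qed
  define xs where "xs = sorted_list_of_set S"
  define m where "m = length xs"
  define x where "x i = xs ! i" for i
  have sxs: "sorted_wrt (<) xs" by (simp add: xs_def strict_sorted_list_of_set)
  have setxs: "set xs = S" using finS by (simp add: xs_def)
  have dxs: "distinct xs" by (simp add: xs_def)
  have mS: "m = card S" using finS by (simp add: m_def xs_def)
  have xmono: "\<And>i j. i < j \<Longrightarrow> j < m \<Longrightarrow> x i < x j"
    using sxs unfolding x_def m_def by (intro sorted_wrt_nth_less) auto
  have inj: "inj_on x {..<m}" unfolding x_def m_def using dxs by (intro inj_on_nth) auto
  have imx: "x ` {..<m} = S"
  proof -
    have "x ` {..<m} = set xs" by (auto simp: x_def m_def set_conv_nth)
    then show ?thesis using setxs by simp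
  qed
  have s1: "set_pmf \<nu> \<subseteq> x ` {..<m}" and s2: "set_pmf \<nu>' \<subseteq> x ` {..<m}" using imx by (auto simp: S_def)
  have xr: "\<And>i. i < m \<Longrightarrow> \<bar>x i\<bar> \<le> 1"
  proof -
    fix i assume "i < m"
    then have "x i \<in> S" using imx by auto
    then show "\<bar>x i\<bar> \<le> 1" using r1 r2 by (auto simp: S_def abs_le_iff dest!: subsetD)
  qed
  define w where "w i = pmf \<nu> (x i) - pmf \<nu>' (x i)" for i
  have sum1: "(\<Sum>i<m. pmf p (x i)) = 1" if "set_pmf p \<subseteq> x ` {..<m}" for p
  proof -
    have "(\<Sum>i<m. pmf p (x i)) = (\<Sum>u\<in>x ` {..<m}. pmf p u)" using inj by (simp add: sum.reindex)
    also have "\<dots> = 1" using that by (intro sum_pmf_eq_1) auto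
    finally show ?thesis .
  qed
  have wsum: "(\<Sum>i<m. w i) = 0" using sum1[OF s1] sum1[OF s2] by (simp add: w_def sum_subtractf)
  have momsum: "moment r p = (\<Sum>i<m. pmf p (x i) * x i ^ r)" if "set_pmf p \<subseteq> x ` {..<m}" for p r
  proof -
    have "moment r p = (\<Sum>u\<in>x ` {..<m}. u ^ r * pmf p u)"
      unfolding moment_def using that by (intro integral_measure_pmf_real) auto
    also have "\<dots> = (\<Sum>i<m. pmf p (x i) * x i ^ r)" using inj by (simp add: sum.reindex mult.commute)
    finally show ?thesis .
  qed
  have mom: "\<And>r. 1 \<le> r \<Longrightarrow> r \<le> N \<Longrightarrow> \<bar>\<Sum>i<m. w i * x i ^ r\<bar> \<le> \<delta>"
  proof -
    fix r assume "1 \<le> r" "r \<le> N"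
    have "(\<Sum>i<m. w i * x i ^ r) = moment r \<nu> - moment r \<nu>'"
      using momsum[OF s1] momsum[OF s2] by (simp add: w_def sum_subtractf left_diff_distrib)
    then show "\<bar>\<Sum>i<m. w i * x i ^ r\<bar> \<le> \<delta>" using momd \<open>1 \<le> r\<close> \<open>r \<le> N\<close> by (simp add: N_def)
  qed
  have mN: "m \<le> N + 1" using cardS mS k1 by (simp add: N_def)
  define F where "F = (\<lambda>j. \<Sum>i<j. pmf \<nu> (x i))"
  define F' where "F' = (\<lambda>j. \<Sum>i<j. pmf \<nu>' (x i))"
  have W: "W1 \<nu> \<nu>' \<le> (\<Sum>l<m-1. \<bar>x (Suc l) - x l\<bar> * \<bar>F (Suc l) - F' (Suc l)\<bar>)"
    unfolding F_def F'_def by (rule coupling_bound[OF inj s1 s2])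
  have trm: "\<bar>x (Suc l) - x l\<bar> * \<bar>F (Suc l) - F' (Suc l)\<bar> \<le> 8 * \<delta> powr (1 / real N)"
    if l: "l < m - 1" for l
  proof -
    have Sl: "Suc l < m" using l by simp
    have G: "F (Suc l) - F' (Suc l) = (\<Sum>i<Suc l. w i)" by (simp add: F_def F'_def w_def sum_subtractf)
    have Fb: "0 \<le> F j" "F j \<le> 1" "0 \<le> F' j" "F' j \<le> 1" if "j \<le> m" for j
    proof -
      have "F j \<le> F m" unfolding F_def using that by (intro sum_mono2) auto
      moreover have "F' j \<le> F' m" unfolding F'_def using that by (intro sum_mono2) auto
      ultimately show "0 \<le> F j" "F j \<le> 1" "0 \<le> F' j" "F' j \<le> 1"
        using sum1[OF s1] sum1[OF s2] by (auto simp: F_def F'_def intro: sum_nonneg)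
    qed
    have gb: "\<bar>\<Sum>i<Suc l. w i\<bar> \<le> 1" using Fb[of "Suc l"] Sl G by auto
    have mb: "\<bar>\<Sum>i<Suc l. w i\<bar> * ((x (Suc l) - x l) / 2) * ((x (Suc l) - x l) / 4) ^ (m - 2) \<le> 2 ^ (m - 2) * \<delta>"
      by (rule main_bound[OF xmono xr wsum mom mN Sl])
    have hpos: "0 < x (Suc l) - x l" using xmono[OF _ Sl, of l] by simp
    have h2: "x (Suc l) - x l \<le> 2" using xr[of l] xr[OF Sl] Sl by auto
    have "\<bar>\<Sum>i<Suc l. w i\<bar> * (x (Suc l) - x l) \<le> 8 * \<delta> powr (1 / real N)"
      using final_arith[OF abs_ge_zero gb hpos h2, of "m - 1" N] mb mN Sl dpos
      by (simp add: numeral_2_eq_2)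
    then show ?thesis using G hpos by (simp add: mult.commute)
  qed
  have "W1 \<nu> \<nu>' \<le> (\<Sum>l<m-1. 8 * \<delta> powr (1 / real N))"
    using W trm by (meson lessThan_iff order_trans sum_mono)
  also have "\<dots> = real (m - 1) * (8 * \<delta> powr (1 / real N))" by simp
  also have "\<dots> \<le> (16 * real k) * \<delta> powr (1 / real N)"
  proof -
    have "real (m - 1) * 8 \<le> 16 * real k" using mN by (simp add: N_def)
    then show ?thesis by (simp add: mult.assoc[symmetric] mult_right_mono)
  qed
  finally show "W1 \<nu> \<nu>' \<le> 16 * real k * \<delta> powr (1 / (2 * real k - 1))" by (simp add: Nr)
qed

end
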